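(* If $\psi,\phi\in\mathcal{S}(\mathbb{R}_+)$, then $W_{\mathrm{Aff}}^{\psi,\phi}\in\mathcal{S}(\mathrm{Aff})$.
   Context: $\mathcal{S}(\mathbb{R}_+)$ is the space of smooth $\psi:\mathbb{R}_+\to\mathbb{C}$ such that $x\mapsto\psi(e^x)$ lies in the Schwartz space $\mathcal{S}(\mathbb{R})$. $\mathcal{S}(\mathrm{Aff})$ is the space of smooth functions $f$ on $\mathbb{R}\times\mathbb{R}_+$ such that $(x,\omega)\mapsto f(x,e^\omega)$ lies in $\mathcal{S}(\mathbb{R}^2)$. Let $\lambda(u) := \frac{ue^u}{e^u-1}$ for $u\neq 0$, $\lambda(0):=1$. Affine cross-Wigner transform: $W_{\mathrm{Aff}}^{\psi,\phi}(x,a) := \int_{-\infty}^{\infty}\psi(a\lambda(u))\overline{\phi(a\lambda(-u))}e^{-2\pi i x u}\,du$ for $x\in\mathbb{R}$, $a>0$. *)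

theory Defs
  imports "HOL-Analysis.Analysis"
begin

definition vd1 :: "(real \<Rightarrow> complex) \<Rightarrow> real \<Rightarrow> complex" where
  "vd1 f x = vector_derivative f (at x)"

definition schwartz1 :: "(real \<Rightarrow> complex) \<Rightarrow> bool" where
  "schwartz1 f \<longleftrightarrow>
     (\<forall>n x. ((vd1 ^^ n) f) differentiable (at x)) \<and>
     (\<forall>m n. bounded (range (\<lambda>x. complex_of_real (x ^ m) * (vd1 ^^ n) f x)))"

definition pdir :: "bool \<Rightarrow> (real \<Rightarrow> real \<Rightarrow> complex) \<Rightarrow> real \<Rightarrow> real \<Rightarrow> complex" where
  "pdir d g = (if d then (\<lambda>x y. vector_derivative (\<lambda>t. g t y) (at x))
                    else (\<lambda>x y. vector_derivative (\<lambda>t. g x t) (at y)))"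

definition pderivs :: "bool list \<Rightarrow> (real \<Rightarrow> real \<Rightarrow> complex) \<Rightarrow> real \<Rightarrow> real \<Rightarrow> complex" where
  "pderivs ws g = foldr pdir ws g"

definition schwartz2 :: "(real \<Rightarrow> real \<Rightarrow> complex) \<Rightarrow> bool" where
  "schwartz2 f \<longleftrightarrow>
     (\<forall>ws. continuous_on UNIV (\<lambda>p. pderivs ws f (fst p) (snd p)) \<and>
           (\<forall>x y. (\<lambda>t. pderivs ws f t y) differentiable (at x) \<and>
                  (\<lambda>t. pderivs ws f x t) differentiable (at y))) \<and>
     (\<forall>ws a b. bounded (range (\<lambda>p::real\<times>real.
        complex_of_real (fst p ^ a * snd p ^ b) * pderivs ws f (fst p) (snd p))))"

definition schwartz_Rplus :: "(real \<Rightarrow> complex) \<Rightarrow> bool" where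
  "schwartz_Rplus \<psi> \<longleftrightarrow> schwartz1 (\<lambda>x. \<psi> (exp x))"

definition schwartz_Aff :: "(real \<Rightarrow> real \<Rightarrow> complex) \<Rightarrow> bool" where
  "schwartz_Aff f \<longleftrightarrow> schwartz2 (\<lambda>x \<omega>. f x (exp \<omega>))"

definition lam :: "real \<Rightarrow> real" where
  "lam u = (if u = 0 then 1 else u * exp u / (exp u - 1))"

definition W_Aff :: "(real \<Rightarrow> complex) \<Rightarrow> (real \<Rightarrow> complex) \<Rightarrow> real \<Rightarrow> real \<Rightarrow> complex" where
  "W_Aff \<psi> \<phi> x a = (LINT u|lborel. \<psi> (a * lam u) * cnj (\<phi> (a * lam (- u)))
                        * cis (- 2 * pi * x * u))"

end

theory Submission
  imports Defs "HOL-Probability.Sinc_Integral" "HOL-Real_Asymp.Real_Asymp"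
begin


lemma integrable_w: "integrable lborel (\<lambda>u::real. inverse (1 + u^2))"
  using integrable_inverse_1_plus_square by (simp add: set_integrable_def)

lemma integral_w: "(LINT u|lborel. inverse (1 + u^2)) = pi"
  using LBINT_inverse_1_plus_square
  by (simp add: interval_lebesgue_integral_def set_lebesgue_integral_def)

lemma meas_cont: "continuous_on UNIV (f::real \<Rightarrow> complex) \<Longrightarrow> f \<in> borel_measurable lborel"
  by (simp add: borel_measurable_continuous_onI)

lemma meas_cont2: "continuous_on UNIV (f::real \<Rightarrow> complex) \<Longrightarrow> f \<in> borel_measurable borel"
  by (simp add: borel_measurable_continuous_onI)

lemma int_bound:
  fixes k :: "real \<Rightarrow> complex"
  assumes "k \<in> borel_measurable lborel" "\<And>u. norm (k u) \<le> K * inverse (1 + u^2)"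
  shows "integrable lborel k" "norm (LINT u|lborel. k u) \<le> K * pi"
proof -
  have iw: "integrable lborel (\<lambda>u::real. K * inverse (1 + u^2))"
    using integrable_w by simp
  show ik: "integrable lborel k"
    by (rule Bochner_Integration.integrable_bound[OF iw assms(1)]) (use assms(2) in \<open>auto intro: order_trans[OF _ abs_ge_self]\<close>)
  have "norm (LINT u|lborel. k u) \<le> (LINT u|lborel. norm (k u))"
    by (rule integral_norm_bound)
  also have "\<dots> \<le> (LINT u|lborel. K * inverse (1 + u^2))"
    by (rule integral_mono) (use ik iw assms(2) in auto)
  also have "\<dots> = K * pi" using integral_w by simp
  finally show "norm (LINT u|lborel. k u) \<le> K * pi" .
qed



lemma vd_iff:
  fixes f :: "real \<Rightarrow> complex"
  shows "(f has_vector_derivative D) (at x) \<longleftrightarrow>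
    ((\<lambda>y. (f y - f x) / of_real (y - x)) \<longlongrightarrow> D) (at x)"
proof -
  have "(f has_vector_derivative D) (at x) \<longleftrightarrow>
     ((\<lambda>y. norm ((f y - f x) - (y - x) *\<^sub>R D) / norm (y - x)) \<longlongrightarrow> 0) (at x)"
    unfolding has_vector_derivative_def has_derivative_iff_norm
    by (simp add: bounded_linear_scaleR_left)
  also have "\<dots> \<longleftrightarrow> ((\<lambda>y. norm ((f y - f x) / of_real (y - x) - D)) \<longlongrightarrow> 0) (at x)"
  proof (rule tendsto_cong)
    show "\<forall>\<^sub>F y in at x. norm ((f y - f x) - (y - x) *\<^sub>R D) / norm (y - x) =
         norm ((f y - f x) / of_real (y - x) - D)"
      unfolding eventually_at_filter
    proof (intro always_eventually allI impI)
      fix y assume "y \<noteq> x"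
      then have "of_real (y - x) \<noteq> (0::complex)" by simp
      then have eq: "(f y - f x) / of_real (y - x) - D = ((f y - f x) - (y - x) *\<^sub>R D) / of_real (y - x)"
        by (simp add: field_simps scaleR_conv_of_real del: of_real_diff)
      show "norm ((f y - f x) - (y - x) *\<^sub>R D) / norm (y - x) =
         norm ((f y - f x) / of_real (y - x) - D)"
        by (simp only: eq norm_divide norm_of_real real_norm_def)
    qed
  qed
  also have "\<dots> \<longleftrightarrow> ((\<lambda>y. (f y - f x) / of_real (y - x)) \<longlongrightarrow> D) (at x)"
    by (simp only: tendsto_norm_zero_iff LIM_zero_iff)
  finally show ?thesis .
qed


lemma mvt_vd:
  fixes g :: "real \<Rightarrow> complex"
  assumes "\<And>p. (g has_vector_derivative g' p) (at p)" "\<And>p. norm (g' p) \<le> C"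
  shows "norm (g a - g b) \<le> C * norm (a - b)"
proof (rule differentiable_bound[where S=UNIV and f'="\<lambda>p h. h *\<^sub>R g' p"])
  show "(g has_derivative (\<lambda>h. h *\<^sub>R g' x)) (at x within UNIV)" for x
    using assms(1)[of x] by (simp add: has_vector_derivative_def)
  show "onorm (\<lambda>h. h *\<^sub>R g' x) \<le> C" for x
    using assms(2)[of x] by (simp add: onorm_scaleR_left[OF bounded_linear_ident] onorm_id)
qed auto

lemma deriv_int:
  fixes k k' :: "real \<Rightarrow> real \<Rightarrow> complex"
  assumes D: "\<And>p u. ((\<lambda>p. k p u) has_vector_derivative k' p u) (at p)"
  and M: "\<And>p. k p \<in> borel_measurable lborel" "\<And>p. k' p \<in> borel_measurable lborel"
  and B: "\<And>p u. norm (k' p u) \<le> K * inverse (1 + u^2)"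
  and I: "\<And>p. integrable lborel (k p)"
  shows "((\<lambda>p. LINT u|lborel. k p u) has_vector_derivative (LINT u|lborel. k' p u)) (at p)"
  unfolding vd_iff tendsto_at_iff_sequentially comp_def
proof (intro allI impI)
  fix X assume X: "\<forall>i. X i \<in> UNIV - {p}" "X \<longlonglongrightarrow> p"
  define q where "q i u = (k (X i) u - k p u) / of_real (X i - p)" for i u
  have mvt: "norm (k a u - k b u) \<le> K * inverse (1 + u^2) * norm (a - b)" for a b u
    by (rule mvt_vd[OF D B])
  have "(\<lambda>i. LINT u|lborel. q i u) \<longlonglongrightarrow> (LINT u|lborel. k' p u)"
  proof (rule integral_dominated_convergence[where w = "\<lambda>u. K * inverse (1 + u^2)"])
    show "k' p \<in> borel_measurable lborel" by (rule M)
    show "(\<lambda>u. q i u) \<in> borel_measurable lborel" for i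
      unfolding q_def by (intro borel_measurable_divide borel_measurable_diff M borel_measurable_const)
    show "integrable lborel (\<lambda>u. K * inverse (1 + u^2))" using integrable_w by simp
    show "AE u in lborel. (\<lambda>i. q i u) \<longlonglongrightarrow> k' p u"
    proof (intro AE_I2)
      fix u
      have "((\<lambda>y. (k y u - k p u) / of_real (y - p)) \<longlongrightarrow> k' p u) (at p)"
        by (rule vd_iff[THEN iffD1, OF D])
      then show "(\<lambda>i. q i u) \<longlonglongrightarrow> k' p u"
        unfolding q_def tendsto_at_iff_sequentially comp_def using X by blast
    qed
    show "AE u in lborel. norm (q i u) \<le> K * inverse (1 + u^2)" for i
    proof (intro AE_I2)
      fix u
      have ne: "X i - p \<noteq> 0" using X by auto
      have "norm (q i u) = norm (k (X i) u - k p u) / norm (X i - p)"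
        unfolding q_def by (simp add: norm_divide del: of_real_diff)
      also have "\<dots> \<le> K * inverse (1 + u^2) * norm (X i - p) / norm (X i - p)"
        by (intro divide_right_mono mvt) auto
      also have "\<dots> = K * inverse (1 + u^2)" using ne by simp
      finally show "norm (q i u) \<le> K * inverse (1 + u^2)" .
    qed
  qed
  moreover have "(LINT u|lborel. q i u) =
     ((LINT u|lborel. k (X i) u) - (LINT u|lborel. k p u)) / of_real (X i - p)" for i
    unfolding q_def by (simp add: Bochner_Integration.integral_diff[OF I I] del: of_real_diff)
  ultimately show "(\<lambda>i. ((LINT u|lborel. k (X i) u) - (LINT u|lborel. k p u)) / of_real (X i - p))
     \<longlonglongrightarrow> (LINT u|lborel. k' p u)" by simp
qed



lemma cont_int:
  fixes k :: "real \<times> real \<Rightarrow> real \<Rightarrow> complex"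
  assumes C: "\<And>u. continuous_on UNIV (\<lambda>q. k q u)"
  and M: "\<And>q. k q \<in> borel_measurable lborel"
  and B: "\<And>q u. norm (k q u) \<le> K * inverse (1 + u^2)"
  shows "continuous_on UNIV (\<lambda>q. LINT u|lborel. k q u)"
proof (rule continuous_on_sequentiallyI)
  fix X :: "nat \<Rightarrow> real \<times> real" and a assume X: "X \<longlonglongrightarrow> a"
  show "(\<lambda>n. LINT u|lborel. k (X n) u) \<longlonglongrightarrow> (LINT u|lborel. k a u)"
  proof (rule integral_dominated_convergence[where w = "\<lambda>u. K * inverse (1 + u^2)"])
    show "integrable lborel (\<lambda>u. K * inverse (1 + u^2))" using integrable_w by simp
    show "AE u in lborel. (\<lambda>n. k (X n) u) \<longlonglongrightarrow> k a u"
    proof (intro AE_I2)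
      fix u
      have "isCont (\<lambda>q. k q u) a" using C[of u] by (auto simp: continuous_on_eq_continuous_at simp del: split_paired_All)
      then show "(\<lambda>n. k (X n) u) \<longlonglongrightarrow> k a u" by (rule isCont_tendsto_compose) (rule X)
    qed
  qed (insert M B, auto)
qed

lemma vd_cis: "((\<lambda>u. cis (c * u)) has_vector_derivative (\<i> * of_real c * cis (c * u))) (at u within A)"
proof -
  have "((\<lambda>u. cis (c * u)) has_derivative (\<lambda>t. (c * t) *\<^sub>R (\<i> * cis (c * u)))) (at u within A)"
    by (intro has_derivative_cis has_derivative_mult_right has_derivative_ident)
  moreover have "(\<lambda>t. (c * t) *\<^sub>R (\<i> * cis (c*u))) = (\<lambda>t. t *\<^sub>R (\<i> * of_real c * cis (c*u)))"
    by (auto simp: scaleR_conv_of_real)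
  ultimately show ?thesis by (simp add: has_vector_derivative_def)
qed

lemma lim_inv_top: "((\<lambda>u::real. inverse (1 + u^2)) \<longlongrightarrow> 0) at_top" by real_asymp
lemma lim_inv_bot: "((\<lambda>u::real. inverse (1 + u^2)) \<longlongrightarrow> 0) at_bot" by real_asymp

lemma ibp:
  fixes h h' :: "real \<Rightarrow> complex"
  assumes D: "\<And>u. (h has_vector_derivative h' u) (at u)"
  and Ch: "continuous_on UNIV h'"
  and Bh: "\<And>u. norm (h u) \<le> K * inverse (1 + u^2)"
  and Bh': "\<And>u. norm (h' u) \<le> K' * inverse (1 + u^2)"
  shows "- (\<i> * of_real c) * (LINT u|lborel. h u * cis (c * u)) =
         (LINT u|lborel. h' u * cis (c * u))"
proof -
  define g where "g u = h u * cis (c * u)" for u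
  define g' where "g' u = h' u * cis (c * u) + (\<i> * of_real c) * (h u * cis (c * u))" for u
  have Dg: "(g has_vector_derivative g' u) (at u)" for u
    unfolding g_def g'_def using has_vector_derivative_mult[OF D[of u] vd_cis[of c u UNIV]]
    by (simp add: algebra_simps)
  have ch: "continuous_on UNIV h"
    using D by (intro continuous_at_imp_continuous_on ballI) (auto intro: has_vector_derivative_continuous)
  have cg': "continuous_on UNIV g'"
    unfolding g'_def by (intro continuous_intros ch Ch)
  have i1: "integrable lborel (\<lambda>u. h u * cis (c * u))"
    by (rule int_bound(1)[where K=K]) (auto intro!: meas_cont meas_cont2 continuous_intros ch simp: norm_mult Bh)
  have i2: "integrable lborel (\<lambda>u. h' u * cis (c * u))"
    by (rule int_bound(1)[where K=K']) (auto intro!: meas_cont meas_cont2 continuous_intros Ch simp: norm_mult Bh')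
  have i3: "integrable lborel g'"
    unfolding g'_def using i1 i2 by simp
  have lim: "(g \<longlongrightarrow> 0) F" if "((\<lambda>u::real. inverse (1 + u^2)) \<longlongrightarrow> 0) F" for F
  proof (rule Lim_null_comparison)
    show "\<forall>\<^sub>F u in F. norm (g u) \<le> K * inverse (1 + u^2)"
      by (intro always_eventually allI) (simp add: g_def norm_mult Bh)
    show "((\<lambda>u. K * inverse (1 + u^2)) \<longlongrightarrow> 0) F"
      using tendsto_mult_right_zero[OF that] by simp
  qed
  have "(LBINT u=-\<infinity>..\<infinity>. g' u) = 0 - 0"
  proof (rule interval_integral_FTC_integrable[where F=g])
    show "set_integrable lborel (einterval (-\<infinity>) \<infinity>) g'"
      using i3 by (simp add: set_integrable_def)
    show "((g \<circ> real_of_ereal) \<longlongrightarrow> 0) (at_right (-\<infinity>))"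
      unfolding ereal_tendsto_simps using lim[OF lim_inv_bot] .
    show "((g \<circ> real_of_ereal) \<longlongrightarrow> 0) (at_left \<infinity>)"
      unfolding ereal_tendsto_simps using lim[OF lim_inv_top] .
  qed (use Dg cg' in \<open>auto simp: continuous_on_eq_continuous_at\<close>)
  then have "(LINT u|lborel. g' u) = 0"
    by (simp add: interval_lebesgue_integral_def set_lebesgue_integral_def)
  then have "(LINT u|lborel. h' u * cis (c * u)) + (\<i> * of_real c) * (LINT u|lborel. h u * cis (c * u)) = 0"
    unfolding g'_def using i1 i2 by simp
  then have "(\<i> * of_real c) * (LINT u|lborel. h u * cis (c * u)) = - (LINT u|lborel. h' u * cis (c * u))"
    by (simp only: add_eq_0_iff)
  then show ?thesis by (simp only: mult_minus_left minus_equation_iff minus_minus)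
qed



definition Ik :: "nat \<Rightarrow> real \<Rightarrow> real" where
  "Ik k u = integral {0..1} (\<lambda>t. t ^ k * exp (t * u))"

lemma Ik_integrable: "(\<lambda>t::real. t ^ k * exp (t * u)) integrable_on {0..1}"
  by (rule integrable_continuous_interval) (auto intro!: continuous_intros)

lemma Ik_deriv: "(Ik k has_real_derivative Ik (Suc k) u) (at u)"
proof -
  have "((\<lambda>x. integral (cbox 0 1) (\<lambda>t. t ^ k * exp (t * x))) has_field_derivative
      integral (cbox 0 1) (\<lambda>t. t ^ Suc k * exp (t * u))) (at u within UNIV)"
  proof (rule leibniz_rule_field_derivative)
    show "((\<lambda>x. t ^ k * exp (t * x)) has_field_derivative t ^ Suc k * exp (t * x)) (at x within UNIV)" for x t :: real
      by (auto intro!: derivative_eq_intros simp: algebra_simps)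
    show "(\<lambda>t. t ^ k * exp (t * x)) integrable_on cbox 0 1" for x :: real
      using Ik_integrable by simp
    show "continuous_on (UNIV \<times> cbox 0 1) (\<lambda>(x, t). t ^ Suc k * exp (t * x :: real))"
      by (auto intro!: continuous_intros simp: case_prod_beta)
  qed auto
  then show ?thesis by (simp add: Ik_def[abs_def])
qed

lemma Ik_nonneg: "0 \<le> Ik k u"
  unfolding Ik_def by (rule integral_nonneg[OF Ik_integrable]) auto

lemma Ik_le: "Ik k u \<le> Ik 0 u"
  unfolding Ik_def
  by (rule integral_le[OF Ik_integrable Ik_integrable])
     (auto intro!: mult_right_le_one_le power_le_one)

lemma I0_bounds:
  shows "0 \<le> u \<Longrightarrow> 1 \<le> Ik 0 u \<and> Ik 0 u \<le> exp u"
    and "u \<le> 0 \<Longrightarrow> exp u \<le> Ik 0 u \<and> Ik 0 u \<le> 1"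
proof -
  have ic: "(\<lambda>t::real. c) integrable_on {0..1}" for c :: real by (intro integrable_continuous_interval continuous_intros)
  have i0: "(\<lambda>t. exp (t * u)) integrable_on {0..1}" using Ik_integrable[of 0 u] by simp
  have ic1: "integral {0..1::real} (\<lambda>t. c) = c" for c by simp
  show "0 \<le> u \<Longrightarrow> 1 \<le> Ik 0 u \<and> Ik 0 u \<le> exp u"
  proof
    assume u: "0 \<le> u"
    show "1 \<le> Ik 0 u" using integral_le[OF ic i0, of 1] u unfolding Ik_def ic1 by simp
    show "Ik 0 u \<le> exp u" using integral_le[OF i0 ic, of "exp u"] u unfolding Ik_def ic1
      by (simp add: mult_left_le_one_le)
  qed
  show "u \<le> 0 \<Longrightarrow> exp u \<le> Ik 0 u \<and> Ik 0 u \<le> 1"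
  proof
    assume u: "u \<le> 0"
    have "u \<le> x * u" if "0 \<le> x \<and> x \<le> 1" for x
    proof -
      have "(1 - x) * u \<le> 0" using that u by (intro mult_nonneg_nonpos) auto
      then show ?thesis by (simp add: algebra_simps)
    qed
    then show "exp u \<le> Ik 0 u" using integral_le[OF ic i0, of "exp u"] u unfolding Ik_def ic1
      by simp
    have "x * u \<le> 0" if "0 \<le> x \<and> x \<le> 1" for x
      using that u by (intro mult_nonneg_nonpos) auto
    then show "Ik 0 u \<le> 1" using integral_le[OF i0 ic, of 1] u unfolding Ik_def ic1
      by simp
  qed
qed

lemma I0_pos: "0 < Ik 0 u"
  using I0_bounds[of u] by (cases "0 \<le> u") (auto intro: less_le_trans[OF exp_gt_zero])

lemma I0_closed: "u \<noteq> 0 \<Longrightarrow> Ik 0 u = (exp u - 1) / u"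
proof -
  assume u: "u \<noteq> 0"
  have "((\<lambda>t. exp (t * u)) has_integral (exp (1 * u) / u - exp (0 * u) / u)) {0..1}"
  proof (rule fundamental_theorem_of_calculus)
    show "((\<lambda>t. exp (t * u) / u) has_vector_derivative exp (t * u)) (at t within {0..1})" for t
      using u by (auto intro!: derivative_eq_intros simp: has_real_derivative_iff_has_vector_derivative[symmetric])
  qed auto
  then show ?thesis unfolding Ik_def using u by (simp add: integral_unique diff_divide_distrib)
qed


definition Sf :: "real \<Rightarrow> real" where "Sf u = u - ln (Ik 0 u)"
definition Tf :: "real \<Rightarrow> real" where "Tf u = - ln (Ik 0 u)"
definition Rk :: "nat \<Rightarrow> real \<Rightarrow> real" where "Rk k u = Ik k u / Ik 0 u"

lemma I0_zero: "Ik 0 0 = 1"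
  by (simp add: Ik_def)

lemma lam_S: "lam u = exp (Sf u)"
proof (cases "u = 0")
  case True then show ?thesis by (simp add: lam_def Sf_def I0_zero)
next
  case False
  have "exp u \<noteq> 1" using False by simp
  then show ?thesis using False I0_pos[of u]
    by (simp add: lam_def Sf_def exp_diff I0_closed field_simps)
qed

lemma lam_T: "lam (- u) = exp (Tf u)"
proof (cases "u = 0")
  case True then show ?thesis by (simp add: lam_def Tf_def I0_zero)
next
  case False
  have e: "exp u \<noteq> 1" "exp (-u) \<noteq> 1" using False by simp_all
  have "exp (-u) - 1 = (1 - exp u) * exp (-u)" by (simp add: algebra_simps exp_minus_inverse)
  then show ?thesis using False e I0_pos[of u]
    by (simp add: lam_def Tf_def exp_minus I0_closed field_simps)
qed

lemma S_minus_T: "Sf u - Tf u = u" by (simp add: Sf_def Tf_def)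

lemma S_plus_T: "\<bar>Sf u + Tf u\<bar> \<le> \<bar>u\<bar>"
proof (cases "0 \<le> u")
  case True
  with I0_bounds(1)[of u] have b: "1 \<le> Ik 0 u" "Ik 0 u \<le> exp u" by auto
  have "0 \<le> ln (Ik 0 u)" using b by simp
  moreover have "ln (Ik 0 u) \<le> ln (exp u)" using b I0_pos[of u] by (subst ln_le_cancel_iff) auto
  ultimately have "0 \<le> ln (Ik 0 u)" "ln (Ik 0 u) \<le> u" by auto
  then show ?thesis using True by (simp add: Sf_def Tf_def)
next
  case False
  with I0_bounds(2)[of u] have b: "exp u \<le> Ik 0 u" "Ik 0 u \<le> 1" by auto
  have "ln (Ik 0 u) \<le> 0" using b I0_pos[of u] by simp
  moreover have "ln (exp u) \<le> ln (Ik 0 u)" using b I0_pos[of u] by (subst ln_le_cancel_iff) auto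
  ultimately have "ln (Ik 0 u) \<le> 0" "u \<le> ln (Ik 0 u)" by auto
  then show ?thesis using False by (simp add: Sf_def Tf_def)
qed

lemma S_deriv: "(Sf has_real_derivative (1 + (-1) * Rk 1 u)) (at u)"
  unfolding Sf_def[abs_def] Rk_def
  using I0_pos[of u] Ik_deriv[of 0 u]
  by (auto intro!: derivative_eq_intros simp: field_simps)

lemma T_deriv: "(Tf has_real_derivative ((-1) * Rk 1 u)) (at u)"
  unfolding Tf_def[abs_def] Rk_def
  using I0_pos[of u] Ik_deriv[of 0 u]
  by (auto intro!: derivative_eq_intros simp: field_simps)

lemma R_deriv: "(Rk k has_real_derivative (Rk (Suc k) u + (-1) * (Rk k u * Rk 1 u))) (at u)"
  unfolding Rk_def[abs_def]
  using I0_pos[of u] Ik_deriv[of 0 u] Ik_deriv[of k u]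
  by (auto intro!: derivative_eq_intros simp: field_simps power2_eq_square)

lemma R_bound: "\<bar>Rk k u\<bar> \<le> 1"
  using I0_pos[of u] Ik_le[of k u] Ik_nonneg[of k u] by (simp add: Rk_def)

inductive Pc :: "(real \<Rightarrow> real) \<Rightarrow> bool" where
  Pconst: "Pc (\<lambda>u. c)"
| Pid: "Pc (\<lambda>u. u)"
| PR: "Pc (Rk k)"
| Padd: "Pc f \<Longrightarrow> Pc g \<Longrightarrow> Pc (\<lambda>u. f u + g u)"
| Pmult: "Pc f \<Longrightarrow> Pc g \<Longrightarrow> Pc (\<lambda>u. f u * g u)"

lemma Pc_deriv: "Pc f \<Longrightarrow> \<exists>f'. Pc f' \<and> (\<forall>u. (f has_real_derivative f' u) (at u))"
proof (induction rule: Pc.induct)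
  case (Pconst c)
  then show ?case by (intro exI[of _ "\<lambda>u. 0"]) (auto intro: Pc.intros)
next
  case Pid
  then show ?case by (intro exI[of _ "\<lambda>u. 1"]) (auto intro: Pc.intros)
next
  case (PR k)
  then show ?case
  proof (intro exI conjI)
    show "Pc (\<lambda>u. Rk (Suc k) u + (-1) * (Rk k u * Rk 1 u))" by (intro Pc.intros)
    show "\<forall>u. (Rk k has_real_derivative Rk (Suc k) u + (-1) * (Rk k u * Rk 1 u)) (at u)"
      using R_deriv by blast
  qed
next
  case (Padd f g)
  then obtain f' g' where "Pc f'" "Pc g'" "\<And>u. (f has_real_derivative f' u) (at u)"
    "\<And>u. (g has_real_derivative g' u) (at u)" by blast
  then show ?case
    by (intro exI[of _ "\<lambda>u. f' u + g' u"]) (auto intro!: Pc.intros derivative_eq_intros)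
next
  case (Pmult f g)
  then obtain f' g' where "Pc f'" "Pc g'" "\<And>u. (f has_real_derivative f' u) (at u)"
    "\<And>u. (g has_real_derivative g' u) (at u)" by blast
  then show ?case
    by (intro exI[of _ "\<lambda>u. f u * g' u + f' u * g u"]) (auto intro!: Pc.intros derivative_eq_intros Pmult)
qed

lemma Pc_cont: "Pc f \<Longrightarrow> continuous_on UNIV f"
  using Pc_deriv[of f]
  by (metis DERIV_isCont continuous_at_imp_continuous_on)

lemma pow_mono_1: "1 \<le> (x::real) \<Longrightarrow> m \<le> n \<Longrightarrow> x ^ m \<le> x ^ n"
  by (rule power_increasing)

lemma Pc_bound: "Pc f \<Longrightarrow> \<exists>C N. 0 \<le> C \<and> (\<forall>u. \<bar>f u\<bar> \<le> C * (1 + \<bar>u\<bar>) ^ N)"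
proof (induction rule: Pc.induct)
  case (Pconst c)
  then show ?case by (intro exI[of _ "\<bar>c\<bar>"] exI[of _ 0]) auto
next
  case Pid
  then show ?case by (intro exI[of _ 1] exI[of _ 1]) auto
next
  case (PR k)
  then show ?case by (intro exI[of _ 1] exI[of _ 0]) (auto simp: R_bound)
next
  case (Padd f g)
  then obtain C1 N1 C2 N2 where b: "0 \<le> C1" "0 \<le> C2" "\<And>u. \<bar>f u\<bar> \<le> C1 * (1 + \<bar>u\<bar>) ^ N1"
    "\<And>u. \<bar>g u\<bar> \<le> C2 * (1 + \<bar>u\<bar>) ^ N2" by blast
  show ?case
  proof (intro exI[of _ "C1 + C2"] exI[of _ "N1 + N2"] conjI allI)
    fix u
    have "\<bar>f u + g u\<bar> \<le> C1 * (1 + \<bar>u\<bar>) ^ N1 + C2 * (1 + \<bar>u\<bar>) ^ N2"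
      using b(3,4)[of u] by linarith
    also have "\<dots> \<le> C1 * (1 + \<bar>u\<bar>) ^ (N1 + N2) + C2 * (1 + \<bar>u\<bar>) ^ (N1 + N2)"
      by (intro add_mono mult_left_mono pow_mono_1) (use b in auto)
    finally show "\<bar>f u + g u\<bar> \<le> (C1 + C2) * (1 + \<bar>u\<bar>) ^ (N1 + N2)"
      by (simp add: algebra_simps)
  qed (use b in auto)
next
  case (Pmult f g)
  then obtain C1 N1 C2 N2 where b: "0 \<le> C1" "0 \<le> C2" "\<And>u. \<bar>f u\<bar> \<le> C1 * (1 + \<bar>u\<bar>) ^ N1"
    "\<And>u. \<bar>g u\<bar> \<le> C2 * (1 + \<bar>u\<bar>) ^ N2" by blast
  show ?case
  proof (intro exI[of _ "C1 * C2"] exI[of _ "N1 + N2"] conjI allI)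
    fix u
    have "\<bar>f u * g u\<bar> \<le> (C1 * (1 + \<bar>u\<bar>) ^ N1) * (C2 * (1 + \<bar>u\<bar>) ^ N2)"
      unfolding abs_mult by (intro mult_mono b) (use b in auto)
    then show "\<bar>f u * g u\<bar> \<le> (C1 * C2) * (1 + \<bar>u\<bar>) ^ (N1 + N2)"
      by (simp add: algebra_simps power_add)
  qed (use b in auto)
qed



lemma sch_deriv:
  assumes "schwartz1 F"
  shows "((vd1 ^^ k) F has_vector_derivative (vd1 ^^ Suc k) F y) (at y)"
proof -
  have "(vd1 ^^ k) F differentiable (at y)" using assms unfolding schwartz1_def by blast
  then show ?thesis by (simp add: vector_derivative_works vd1_def)
qed

lemma sch_cont:
  assumes "schwartz1 F"
  shows "continuous_on UNIV ((vd1 ^^ k) F)"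
  using sch_deriv[OF assms]
  by (intro continuous_at_imp_continuous_on ballI) (auto intro: has_vector_derivative_continuous)

lemma pow_split: "0 \<le> (a::real) \<Longrightarrow> (1 + a) ^ M \<le> 2 ^ M * (1 + a ^ M)"
proof (cases "a \<le> 1")
  case True
  assume "0 \<le> a"
  have "(1 + a) ^ M \<le> 2 ^ M" using True \<open>0 \<le> a\<close> by (intro power_mono) auto
  also have "\<dots> \<le> 2 ^ M * (1 + a ^ M)" using \<open>0 \<le> a\<close> by simp
  finally show ?thesis .
next
  case False
  assume "0 \<le> a"
  have "(1 + a) ^ M \<le> (2 * a) ^ M" using False by (intro power_mono) auto
  also have "\<dots> \<le> 2 ^ M * (1 + a ^ M)" by (simp add: power_mult_distrib)
  finally show ?thesis .
qed

lemma sch_decay: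
  assumes "schwartz1 F"
  shows "\<exists>C. \<forall>y. (1 + \<bar>y\<bar>) ^ M * norm ((vd1 ^^ k) F y) \<le> C"
proof -
  obtain B0 where B0: "\<And>y. norm (complex_of_real (y ^ 0) * (vd1 ^^ k) F y) \<le> B0"
    using assms unfolding schwartz1_def bounded_iff by blast
  obtain BM where BM: "\<And>y. norm (complex_of_real (y ^ M) * (vd1 ^^ k) F y) \<le> BM"
    using assms unfolding schwartz1_def bounded_iff by blast
  show ?thesis
  proof (intro exI allI)
    fix y
    have "(1 + \<bar>y\<bar>) ^ M * norm ((vd1 ^^ k) F y) \<le> 2 ^ M * (1 + \<bar>y\<bar> ^ M) * norm ((vd1 ^^ k) F y)"
      by (intro mult_right_mono pow_split) auto
    also have "\<dots> = 2 ^ M * (norm ((vd1 ^^ k) F y) + norm (complex_of_real (y ^ M) * (vd1 ^^ k) F y))"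
      by (simp add: norm_mult norm_power algebra_simps power_abs)
    also have "\<dots> \<le> 2 ^ M * (B0 + BM)"
      using B0[of y] BM[of y] by (intro mult_left_mono add_mono) auto
    finally show "(1 + \<bar>y\<bar>) ^ M * norm ((vd1 ^^ k) F y) \<le> 2 ^ M * (B0 + BM)" .
  qed
qed

lemma gen_bound:
  fixes A B :: "real \<Rightarrow> complex"
  assumes A: "\<And>y. (1 + \<bar>y\<bar>) ^ (b + N + 2) * norm (A y) \<le> C1"
    and B: "\<And>y. (1 + \<bar>y\<bar>) ^ (b + N + 2) * norm (B y) \<le> C2"
    and p: "\<And>u. \<bar>p u\<bar> \<le> C3 * (1 + \<bar>u\<bar>) ^ N" and C3: "0 \<le> C3"
  shows "\<bar>\<omega>\<bar> ^ b * norm (A (\<omega> + Sf u) * cnj (B (\<omega> + Tf u)) * of_real (p u))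
           \<le> (C3 * C1 * C2) * inverse (1 + u^2)"
proof -
  define a where "a = \<bar>\<omega> + Sf u\<bar>"
  define c where "c = \<bar>\<omega> + Tf u\<bar>"
  define Q where "Q = (1 + a) * (1 + c)"
  define nA where "nA = norm (A (\<omega> + Sf u))"
  define nB where "nB = norm (B (\<omega> + Tf u))"
  have a0: "0 \<le> a" "0 \<le> c" "0 \<le> nA" "0 \<le> nB" by (auto simp: a_def c_def nA_def nB_def)
  have u: "\<bar>u\<bar> \<le> a + c" unfolding a_def c_def using S_minus_T[of u] by linarith
  have w: "\<bar>\<omega>\<bar> \<le> a + c" unfolding a_def c_def using S_plus_T[of u] S_minus_T[of u] by linarith
  have Qge: "1 + a + c \<le> Q" unfolding Q_def using a0 by (simp add: algebra_simps)
  have Q0: "0 \<le> Q" using Qge a0 by linarith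
  have q1: "\<bar>\<omega>\<bar> ^ b \<le> Q ^ b" using w Qge by (intro power_mono) auto
  have q2: "\<bar>p u\<bar> \<le> C3 * Q ^ N"
    using p[of u] u Qge C3 by (smt (verit) mult_left_mono power_mono abs_ge_zero)
  have q3: "1 + u^2 \<le> Q ^ 2"
  proof -
    have "1 + u^2 \<le> (1 + \<bar>u\<bar>)^2" by (simp add: power2_eq_square algebra_simps)
    also have "\<dots> \<le> Q ^ 2" using u Qge by (intro power_mono) auto
    finally show ?thesis .
  qed
  have "\<bar>\<omega>\<bar> ^ b * norm (A (\<omega> + Sf u) * cnj (B (\<omega> + Tf u)) * of_real (p u)) * (1 + u^2)
        = \<bar>\<omega>\<bar> ^ b * (nA * nB) * \<bar>p u\<bar> * (1 + u^2)"
    by (simp add: norm_mult nA_def nB_def)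
  also have "\<dots> \<le> Q ^ b * (nA * nB) * (C3 * Q ^ N) * Q ^ 2"
    using a0 q1 q2 q3 Q0 by (intro mult_mono) auto
  also have "\<dots> = C3 * (Q ^ (b + N + 2) * (nA * nB))"
    by (simp only: power_add mult_ac)
  also have "\<dots> = C3 * (((1 + a) ^ (b + N + 2) * nA) * ((1 + c) ^ (b + N + 2) * nB))"
    unfolding Q_def power_mult_distrib by (simp only: mult_ac)
  also have "\<dots> \<le> C3 * (C1 * C2)"
    using A[of "\<omega> + Sf u"] B[of "\<omega> + Tf u"] a0 C3 order_trans[OF _ A[of 0]] order_trans[OF _ B[of 0]]
    unfolding a_def c_def nA_def nB_def by (intro mult_left_mono mult_mono) auto
  finally have *: "\<bar>\<omega>\<bar> ^ b * norm (A (\<omega> + Sf u) * cnj (B (\<omega> + Tf u)) * of_real (p u)) * (1 + u^2)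
      \<le> C3 * (C1 * C2)" .
  have pos: "0 < 1 + u^2" by (simp add: add_pos_nonneg)
  show ?thesis using * pos by (simp add: field_simps)
qed



lemma comp_vd:
  fixes g :: "real \<Rightarrow> complex"
  assumes "(f has_real_derivative f') (at x)" "(g has_vector_derivative g') (at (f x))"
  shows "((\<lambda>x. g (f x)) has_vector_derivative (f' *\<^sub>R g')) (at x)"
  using vector_diff_chain_at[of f f' x g g'] assms
  by (simp add: has_real_derivative_iff_has_vector_derivative o_def)

inductive Cl :: "(real \<Rightarrow> complex) \<Rightarrow> (real \<Rightarrow> complex) \<Rightarrow> (real \<Rightarrow> real \<Rightarrow> complex) \<Rightarrow> bool"
  for F G where
  gen: "Pc p \<Longrightarrow> Cl F G (\<lambda>w u. (vd1 ^^ k) F (w + Sf u) * cnj ((vd1 ^^ l) G (w + Tf u)) * of_real (p u))"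
| add: "Cl F G f \<Longrightarrow> Cl F G g \<Longrightarrow> Cl F G (\<lambda>w u. f w u + g w u)"
| cmul: "Cl F G f \<Longrightarrow> Cl F G (\<lambda>w u. c * f w u)"

context
  fixes F G :: "real \<Rightarrow> complex"
  assumes sF: "schwartz1 F" and sG: "schwartz1 G"
begin

lemma Cl_dw: "Cl F G h \<Longrightarrow> \<exists>h'. Cl F G h' \<and> (\<forall>w u. ((\<lambda>w. h w u) has_vector_derivative h' w u) (at w))"
proof (induction rule: Cl.induct)
  case (gen p k l)
  let ?h' = "\<lambda>w u. (vd1 ^^ Suc k) F (w + Sf u) * cnj ((vd1 ^^ l) G (w + Tf u)) * of_real (p u)
       + (vd1 ^^ k) F (w + Sf u) * cnj ((vd1 ^^ Suc l) G (w + Tf u)) * of_real (p u)"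
  show ?case
  proof (intro exI conjI allI)
    show "Cl F G ?h'" by (intro Cl.add Cl.gen gen)
    fix w u
    have dF: "((\<lambda>w. (vd1 ^^ k) F (w + Sf u)) has_vector_derivative (vd1 ^^ Suc k) F (w + Sf u)) (at w)"
    proof -
      have "((\<lambda>w. w + Sf u) has_real_derivative 1) (at w)" by (auto intro!: derivative_eq_intros)
      from comp_vd[OF this sch_deriv[OF sF]] show ?thesis by simp
    qed
    have dG: "((\<lambda>w. (vd1 ^^ l) G (w + Tf u)) has_vector_derivative (vd1 ^^ Suc l) G (w + Tf u)) (at w)"
    proof -
      have "((\<lambda>w. w + Tf u) has_real_derivative 1) (at w)" by (auto intro!: derivative_eq_intros)
      from comp_vd[OF this sch_deriv[OF sG]] show ?thesis by simp
    qed
    show "((\<lambda>w. (vd1 ^^ k) F (w + Sf u) * cnj ((vd1 ^^ l) G (w + Tf u)) * of_real (p u)) has_vector_derivative ?h' w u) (at w)"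
      using has_vector_derivative_mult[OF has_vector_derivative_mult[OF dF has_vector_derivative_cnj[OF dG]]
          has_vector_derivative_const[of "of_real (p u)"]]
      by (simp add: algebra_simps)
  qed
next
  case (add f g)
  then obtain f' g' where "Cl F G f'" "Cl F G g'" "\<And>w u. ((\<lambda>w. f w u) has_vector_derivative f' w u) (at w)"
    "\<And>w u. ((\<lambda>w. g w u) has_vector_derivative g' w u) (at w)" by blast
  then show ?case
    by (intro exI[of _ "\<lambda>w u. f' w u + g' w u"]) (auto intro!: Cl.add derivative_eq_intros)
next
  case (cmul f c)
  then obtain f' where "Cl F G f'" "\<And>w u. ((\<lambda>w. f w u) has_vector_derivative f' w u) (at w)" by blast
  then show ?case
    by (intro exI[of _ "\<lambda>w u. c * f' w u"]) (auto intro!: Cl.cmul derivative_eq_intros)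
qed

lemma Cl_du: "Cl F G h \<Longrightarrow> \<exists>h'. Cl F G h' \<and> (\<forall>w u. ((\<lambda>u. h w u) has_vector_derivative h' w u) (at u))"
proof (induction rule: Cl.induct)
  case (gen p k l)
  obtain p' where p': "Pc p'" "\<And>u. (p has_real_derivative p' u) (at u)"
    using Pc_deriv[OF gen] by blast
  let ?h' = "\<lambda>w u. ((vd1 ^^ Suc k) F (w + Sf u) * cnj ((vd1 ^^ l) G (w + Tf u)) * of_real (p u * (1 + (-1) * Rk 1 u))
       + (vd1 ^^ k) F (w + Sf u) * cnj ((vd1 ^^ Suc l) G (w + Tf u)) * of_real (p u * ((-1) * Rk 1 u)))
       + (vd1 ^^ k) F (w + Sf u) * cnj ((vd1 ^^ l) G (w + Tf u)) * of_real (p' u)"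
  show ?case
  proof (intro exI conjI allI)
    show "Cl F G ?h'" by (intro Cl.add Cl.gen Pc.intros gen p')
    fix w u
    have dF: "((\<lambda>u. (vd1 ^^ k) F (w + Sf u)) has_vector_derivative
        (1 + (-1) * Rk 1 u) *\<^sub>R (vd1 ^^ Suc k) F (w + Sf u)) (at u)"
      by (rule comp_vd[OF _ sch_deriv[OF sF]]) (auto intro!: derivative_eq_intros S_deriv)
    have dG: "((\<lambda>u. (vd1 ^^ l) G (w + Tf u)) has_vector_derivative
        ((-1) * Rk 1 u) *\<^sub>R (vd1 ^^ Suc l) G (w + Tf u)) (at u)"
      by (rule comp_vd[OF _ sch_deriv[OF sG]]) (auto intro!: derivative_eq_intros T_deriv)
    have dp: "((\<lambda>u. complex_of_real (p u)) has_vector_derivative of_real (p' u)) (at u)"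
      by (rule has_vector_derivative_of_real[OF p'(2)])
    show "((\<lambda>u. (vd1 ^^ k) F (w + Sf u) * cnj ((vd1 ^^ l) G (w + Tf u)) * of_real (p u)) has_vector_derivative ?h' w u) (at u)"
      using has_vector_derivative_mult[OF has_vector_derivative_mult[OF dF has_vector_derivative_cnj[OF dG]] dp]
      by (simp add: algebra_simps scaleR_conv_of_real)
  qed
next
  case (add f g)
  then obtain f' g' where "Cl F G f'" "Cl F G g'" "\<And>w u. ((\<lambda>u. f w u) has_vector_derivative f' w u) (at u)"
    "\<And>w u. ((\<lambda>u. g w u) has_vector_derivative g' w u) (at u)" by blast
  then show ?case
    by (intro exI[of _ "\<lambda>w u. f' w u + g' w u"]) (auto intro!: Cl.add derivative_eq_intros)
next
  case (cmul f c)
  then obtain f' where "Cl F G f'" "\<And>w u. ((\<lambda>u. f w u) has_vector_derivative f' w u) (at u)" by blast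
  then show ?case
    by (intro exI[of _ "\<lambda>w u. c * f' w u"]) (auto intro!: Cl.cmul derivative_eq_intros)
qed


lemma Cl_bound: "Cl F G h \<Longrightarrow> \<exists>K. \<forall>w u. \<bar>w\<bar> ^ b * norm (h w u) \<le> K * inverse (1 + u^2)"
proof (induction rule: Cl.induct)
  case (gen p k l)
  obtain C3 N where C3: "0 \<le> C3" "\<And>u. \<bar>p u\<bar> \<le> C3 * (1 + \<bar>u\<bar>) ^ N"
    using Pc_bound[OF gen] by blast
  obtain C1 where C1: "\<And>y. (1 + \<bar>y\<bar>) ^ (b + N + 2) * norm ((vd1 ^^ k) F y) \<le> C1"
    using sch_decay[OF sF] by blast
  obtain C2 where C2: "\<And>y. (1 + \<bar>y\<bar>) ^ (b + N + 2) * norm ((vd1 ^^ l) G y) \<le> C2"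
    using sch_decay[OF sG] by blast
  show ?case using gen_bound[OF C1 C2 C3(2) C3(1)] by blast
next
  case (add f g)
  then obtain K1 K2 where K: "\<And>w u. \<bar>w\<bar> ^ b * norm (f w u) \<le> K1 * inverse (1 + u^2)"
    "\<And>w u. \<bar>w\<bar> ^ b * norm (g w u) \<le> K2 * inverse (1 + u^2)" by blast
  show ?case
  proof (intro exI allI)
    fix w u
    have "\<bar>w\<bar> ^ b * norm (f w u + g w u) \<le> \<bar>w\<bar> ^ b * norm (f w u) + \<bar>w\<bar> ^ b * norm (g w u)"
      unfolding distrib_left[symmetric] by (intro mult_left_mono norm_triangle_ineq) auto
    also have "\<dots> \<le> (K1 + K2) * inverse (1 + u^2)" using K[of w u] by (simp add: algebra_simps)
    finally show "\<bar>w\<bar> ^ b * norm (f w u + g w u) \<le> (K1 + K2) * inverse (1 + u^2)" .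
  qed
next
  case (cmul f c)
  then obtain K where K: "\<And>w u. \<bar>w\<bar> ^ b * norm (f w u) \<le> K * inverse (1 + u^2)" by blast
  show ?case
  proof (intro exI allI)
    fix w u
    have "\<bar>w\<bar> ^ b * norm (c * f w u) = norm c * (\<bar>w\<bar> ^ b * norm (f w u))" by (simp add: norm_mult)
    also have "\<dots> \<le> norm c * (K * inverse (1 + u^2))" using K[of w u] by (intro mult_left_mono) auto
    finally show "\<bar>w\<bar> ^ b * norm (c * f w u) \<le> (norm c * K) * inverse (1 + u^2)" by simp
  qed
qed

lemma contF: "continuous_on S g \<Longrightarrow> continuous_on S (\<lambda>x. (vd1 ^^ k) F (g x))"
  by (rule continuous_on_compose2[OF sch_cont[OF sF]]) auto

lemma contG: "continuous_on S g \<Longrightarrow> continuous_on S (\<lambda>x. (vd1 ^^ k) G (g x))"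
  by (rule continuous_on_compose2[OF sch_cont[OF sG]]) auto

lemma contS[continuous_intros]: "continuous_on S g \<Longrightarrow> continuous_on S (\<lambda>x. Sf (g x))"
  by (rule continuous_on_compose2[of UNIV Sf]) (auto intro!: continuous_at_imp_continuous_on DERIV_isCont S_deriv)

lemma contT[continuous_intros]: "continuous_on S g \<Longrightarrow> continuous_on S (\<lambda>x. Tf (g x))"
  by (rule continuous_on_compose2[of UNIV Tf]) (auto intro!: continuous_at_imp_continuous_on DERIV_isCont T_deriv)

lemma contP: "Pc p \<Longrightarrow> continuous_on S g \<Longrightarrow> continuous_on S (\<lambda>x. p (g x))"
  by (rule continuous_on_compose2[OF Pc_cont]) auto

lemma Cl_cont: "Cl F G h \<Longrightarrow> continuous_on UNIV (\<lambda>q. h (fst q) (snd q))"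
proof (induction rule: Cl.induct)
  case (gen p k l)
  have c1: "continuous_on UNIV (\<lambda>q::real\<times>real. fst q + Sf (snd q))" by (intro continuous_intros)
  have c2: "continuous_on UNIV (\<lambda>q::real\<times>real. fst q + Tf (snd q))" by (intro continuous_intros)
  have c3: "continuous_on UNIV (\<lambda>q::real\<times>real. snd q)" by (intro continuous_intros)
  show ?case
    by (intro continuous_on_mult continuous_on_cnj continuous_on_of_real contF[OF c1] contG[OF c2] contP[OF gen c3])
next
  case (add f g)
  then show ?case by (auto intro!: continuous_intros)
next
  case (cmul f c)
  then show ?case by (auto intro!: continuous_intros)
qed

lemma Cl_cont_u:
  assumes "Cl F G h" shows "continuous_on UNIV (h w)"
proof -
  have cp: "continuous_on UNIV (\<lambda>u::real. (w, u))" by (intro continuous_on_Pair continuous_on_const continuous_on_id)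
  have "continuous_on UNIV (\<lambda>u. (\<lambda>q. h (fst q) (snd q)) (w, u))"
    by (rule continuous_on_compose2[OF Cl_cont[OF assms] cp]) auto
  then show ?thesis by simp
qed

end

lemma Cl_mulu: "Cl F G h \<Longrightarrow> Cl F G (\<lambda>w u. of_real u * h w u)"
proof (induction rule: Cl.induct)
  case (gen p k l)
  have "Cl F G (\<lambda>w u. (vd1 ^^ k) F (w + Sf u) * cnj ((vd1 ^^ l) G (w + Tf u)) * of_real (u * p u))"
    by (intro Cl.gen Pc.intros gen)
  then show ?case by (simp add: algebra_simps)
next
  case (add f g)
  then show ?case using Cl.add[OF add.IH] by (simp add: algebra_simps)
next
  case (cmul f c)
  then show ?case using Cl.cmul[OF cmul.IH, of c] by (simp add: algebra_simps)
qed



definition Fh :: "(real \<Rightarrow> real \<Rightarrow> complex) \<Rightarrow> real \<Rightarrow> real \<Rightarrow> complex" where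
  "Fh h x w = (LINT u|lborel. h w u * cis (- 2 * pi * x * u))"

context
  fixes F G :: "real \<Rightarrow> complex"
  assumes sF: "schwartz1 F" and sG: "schwartz1 G"
begin

lemma bnd0:
  assumes "Cl F G h"
  obtains K where "\<And>w u. norm (h w u) \<le> K * inverse (1 + u^2)"
  using Cl_bound[OF sF sG assms, of 0] by auto

lemma kern_meas: "Cl F G h \<Longrightarrow> (\<lambda>u. h w u * cis (c * u)) \<in> borel_measurable lborel"
  by (intro meas_cont continuous_intros Cl_cont_u[OF sF sG])

lemma kern_int: "Cl F G h \<Longrightarrow> integrable lborel (\<lambda>u. h w u * cis (c * u))"
proof -
  assume h: "Cl F G h"
  obtain K where K: "\<And>w u. norm (h w u) \<le> K * inverse (1 + u^2)" using bnd0[OF h] by blast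
  show ?thesis by (rule int_bound(1)[where K=K, OF kern_meas[OF h]]) (simp add: norm_mult K)
qed

lemma cis_swap: "cis (- 2 * pi * x * u) = cis ((- 2 * pi * x) * u)" by simp

lemma F_dx:
  assumes h: "Cl F G h"
  shows "((\<lambda>x. Fh h x w) has_vector_derivative Fh (\<lambda>w u. (\<i> * of_real (- 2 * pi)) * (of_real u * h w u)) x w) (at x)"
proof -
  define h1 where "h1 = (\<lambda>w u. (\<i> * of_real (- 2 * pi)) * (of_real u * h w u))"
  have h1: "Cl F G h1" unfolding h1_def by (intro Cl.cmul Cl_mulu h)
  obtain K where K: "\<And>w u. norm (h1 w u) \<le> K * inverse (1 + u^2)" using bnd0[OF h1] by blast
  have "((\<lambda>p. LINT u|lborel. h w u * cis ((- 2 * pi * u) * p)) has_vector_derivative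
          (LINT u|lborel. h1 w u * cis ((- 2 * pi * u) * x))) (at x)"
  proof (rule deriv_int[where K=K])
    show "((\<lambda>p. h w u * cis ((- 2 * pi * u) * p)) has_vector_derivative h1 w u * cis ((- 2 * pi * u) * p)) (at p)" for p u
      using has_vector_derivative_mult_right[OF vd_cis[of "- 2 * pi * u" p UNIV], of "h w u"]
      by (simp add: h1_def algebra_simps)
    show "(\<lambda>u. h w u * cis ((- 2 * pi * u) * p)) \<in> borel_measurable lborel" for p
      using kern_meas[OF h, of w "- 2 * pi * p"] by (simp add: mult_ac)
    show "(\<lambda>u. h1 w u * cis ((- 2 * pi * u) * p)) \<in> borel_measurable lborel" for p
      using kern_meas[OF h1, of w "- 2 * pi * p"] by (simp add: mult_ac)
    show "norm (h1 w u * cis ((- 2 * pi * u) * p)) \<le> K * inverse (1 + u^2)" for p u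
      by (simp add: norm_mult K)
    show "integrable lborel (\<lambda>u. h w u * cis ((- 2 * pi * u) * p))" for p
      using kern_int[OF h, of w "- 2 * pi * p"] by (simp add: mult_ac)
  qed
  then show ?thesis unfolding Fh_def h1_def by (simp add: mult_ac)
qed


lemma F_dw:
  assumes h: "Cl F G h" and h': "Cl F G h'"
    and D: "\<And>w u. ((\<lambda>w. h w u) has_vector_derivative h' w u) (at w)"
  shows "((\<lambda>w. Fh h x w) has_vector_derivative Fh h' x w) (at w)"
proof -
  obtain K where K: "\<And>w u. norm (h' w u) \<le> K * inverse (1 + u^2)" using bnd0[OF h'] by blast
  have "((\<lambda>p. LINT u|lborel. h p u * cis (- 2 * pi * x * u)) has_vector_derivative
          (LINT u|lborel. h' w u * cis (- 2 * pi * x * u))) (at w)"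
  proof (rule deriv_int[where K=K])
    show "((\<lambda>p. h p u * cis (- 2 * pi * x * u)) has_vector_derivative h' p u * cis (- 2 * pi * x * u)) (at p)" for p u
      using has_vector_derivative_mult[OF D[where w=p and u=u] has_vector_derivative_const[of "cis (- 2 * pi * x * u)"]]
      by simp
    show "(\<lambda>u. h p u * cis (- 2 * pi * x * u)) \<in> borel_measurable lborel" for p
      using kern_meas[OF h, of p "- 2 * pi * x"] by simp
    show "(\<lambda>u. h' p u * cis (- 2 * pi * x * u)) \<in> borel_measurable lborel" for p
      using kern_meas[OF h', of p "- 2 * pi * x"] by simp
    show "norm (h' p u * cis (- 2 * pi * x * u)) \<le> K * inverse (1 + u^2)" for p u
      by (simp add: norm_mult K)
    show "integrable lborel (\<lambda>u. h p u * cis (- 2 * pi * x * u))" for p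
      using kern_int[OF h, of p "- 2 * pi * x"] by simp
  qed
  then show ?thesis unfolding Fh_def by simp
qed

lemma F_cont:
  assumes h: "Cl F G h"
  shows "continuous_on UNIV (\<lambda>q. Fh h (fst q) (snd q))"
proof -
  obtain K where K: "\<And>w u. norm (h w u) \<le> K * inverse (1 + u^2)" using bnd0[OF h] by blast
  have "continuous_on UNIV (\<lambda>q. LINT u|lborel. h (snd q) u * cis (- 2 * pi * fst q * u))"
  proof (rule cont_int[where K=K])
    fix u :: real
    have cp: "continuous_on UNIV (\<lambda>q::real\<times>real. (snd q, u))" by (intro continuous_intros)
    have "continuous_on UNIV (\<lambda>q::real\<times>real. (\<lambda>q. h (fst q) (snd q)) (snd q, u))"
      by (rule continuous_on_compose2[OF Cl_cont[OF sF sG h] cp]) auto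
    then show "continuous_on UNIV (\<lambda>q. h (snd q) u * cis (- 2 * pi * fst q * u))"
      by (auto intro!: continuous_intros)
  next
    show "(\<lambda>u. h (snd q) u * cis (- 2 * pi * fst q * u)) \<in> borel_measurable lborel" for q
      using kern_meas[OF h, of "snd q" "- 2 * pi * fst q"] by simp
    show "norm (h (snd q) u * cis (- 2 * pi * fst q * u)) \<le> K * inverse (1 + u^2)" for q u
      by (simp add: norm_mult K)
  qed
  then show ?thesis unfolding Fh_def .
qed

lemma F_bound: "Cl F G h \<Longrightarrow> \<exists>B. \<forall>x w. norm (complex_of_real (x ^ a * w ^ b) * Fh h x w) \<le> B"
proof (induction a arbitrary: h)
  case 0
  obtain K where K: "\<And>w u. \<bar>w\<bar> ^ b * norm (h w u) \<le> K * inverse (1 + u^2)"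
    using Cl_bound[OF sF sG 0, of b] by blast
  show ?case
  proof (intro exI allI)
    fix x w
    have "complex_of_real (x ^ 0 * w ^ b) * Fh h x w =
        (LINT u|lborel. complex_of_real (w ^ b) * (h w u * cis (- 2 * pi * x * u)))"
      unfolding Fh_def by simp
    also have "norm \<dots> \<le> K * pi"
    proof (rule int_bound(2))
      show "(\<lambda>u. complex_of_real (w ^ b) * (h w u * cis (- 2 * pi * x * u))) \<in> borel_measurable lborel"
        using kern_meas[OF 0, of w "- 2 * pi * x"] by simp
      show "norm (complex_of_real (w ^ b) * (h w u * cis (- 2 * pi * x * u))) \<le> K * inverse (1 + u^2)" for u
        using K[of w u] by (simp add: norm_mult norm_power power_abs)
    qed
    finally show "norm (complex_of_real (x ^ 0 * w ^ b) * Fh h x w) \<le> K * pi" .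
  qed
next
  case (Suc a)
  obtain h' where h': "Cl F G h'" "\<And>w u. ((\<lambda>u. h w u) has_vector_derivative h' w u) (at u)"
    using Cl_du[OF sF sG Suc.prems] by blast
  obtain B where B: "\<And>x w. norm (complex_of_real (x ^ a * w ^ b) * Fh h' x w) \<le> B"
    using Suc.IH[OF h'(1)] by blast
  obtain K where K: "\<And>w u. norm (h w u) \<le> K * inverse (1 + u^2)" using bnd0[OF Suc.prems] by blast
  obtain K' where K': "\<And>w u. norm (h' w u) \<le> K' * inverse (1 + u^2)" using bnd0[OF h'(1)] by blast
  show ?case
  proof (intro exI allI)
    fix x w
    have e: "- (\<i> * of_real (- 2 * pi * x)) * Fh h x w = Fh h' x w"
      unfolding Fh_def
      by (rule ibp[OF h'(2) Cl_cont_u[OF sF sG h'(1)] K K'])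
    have "norm (complex_of_real (x ^ Suc a * w ^ b) * Fh h x w) * (2 * pi)
        = norm (complex_of_real (x ^ a * w ^ b) * (- (\<i> * of_real (- 2 * pi * x)) * Fh h x w))"
      by (simp add: norm_mult norm_power abs_mult)
    also have "\<dots> \<le> B" unfolding e by (rule B)
    finally show "norm (complex_of_real (x ^ Suc a * w ^ b) * Fh h x w) \<le> B / (2 * pi)"
      by (simp add: field_simps)
  qed
qed
end



theorem mainTheorem10:
  fixes \<psi> \<phi> :: "real \<Rightarrow> complex"
  assumes "schwartz_Rplus \<psi>" and "schwartz_Rplus \<phi>"
  shows "schwartz_Aff (W_Aff \<psi> \<phi>)"
proof -
  define F where "F = (\<lambda>x. \<psi> (exp x))"
  define G where "G = (\<lambda>x. \<phi> (exp x))"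
  have sF: "schwartz1 F" using assms(1) unfolding schwartz_Rplus_def F_def .
  have sG: "schwartz1 G" using assms(2) unfolding schwartz_Rplus_def G_def .
  define f where "f = (\<lambda>x \<omega>. W_Aff \<psi> \<phi> x (exp \<omega>))"
  define g0 where "g0 = (\<lambda>w u. (vd1 ^^ 0) F (w + Sf u) * cnj ((vd1 ^^ 0) G (w + Tf u)) * of_real ((\<lambda>u. 1) u))"
  have g0: "Cl F G g0" unfolding g0_def by (intro Cl.gen Pc.intros)
  have base: "f = (\<lambda>x w. Fh g0 x w)"
  proof (intro ext)
    fix x w
    have "exp w * lam u = exp (w + Sf u)" for u by (simp only: lam_S exp_add)
    moreover have "exp w * lam (- u) = exp (w + Tf u)" for u by (simp only: lam_T exp_add)
    ultimately show "f x w = Fh g0 x w"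
      unfolding f_def W_Aff_def Fh_def g0_def F_def G_def by simp
  qed
  have pd: "\<exists>h. Cl F G h \<and> pderivs ws f = (\<lambda>x w. Fh h x w)" for ws
  proof (induction ws)
    case Nil
    then show ?case using g0 base by (auto simp: pderivs_def)
  next
    case (Cons d ws)
    then obtain h where h: "Cl F G h" "pderivs ws f = (\<lambda>x w. Fh h x w)" by blast
    have pc: "pderivs (d # ws) f = pdir d (\<lambda>x w. Fh h x w)"
      using h(2) by (simp add: pderivs_def)
    show ?case
    proof (cases d)
      case True
      define h1 where "h1 = (\<lambda>w u. (\<i> * of_real (- 2 * pi)) * (of_real u * h w u))"
      have h1: "Cl F G h1" unfolding h1_def by (intro Cl.cmul Cl_mulu h(1))
      have "pdir d (\<lambda>x w. Fh h x w) = (\<lambda>x w. Fh h1 x w)"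
        using True vector_derivative_at[OF F_dx[OF sF sG h(1)]] by (auto simp: pdir_def h1_def)
      then show ?thesis using h1 pc by auto
    next
      case False
      obtain h' where h': "Cl F G h'" "\<And>w u. ((\<lambda>w. h w u) has_vector_derivative h' w u) (at w)"
        using Cl_dw[OF sF sG h(1)] by blast
      have "pdir d (\<lambda>x w. Fh h x w) = (\<lambda>x w. Fh h' x w)"
        using False vector_derivative_at[OF F_dw[OF sF sG h(1) h'(1) h'(2)]] by (auto simp: pdir_def)
      then show ?thesis using h' pc by auto
    qed
  qed
  have "schwartz2 f"
    unfolding schwartz2_def
  proof (intro allI conjI)
    fix ws
    obtain h where h: "Cl F G h" "pderivs ws f = (\<lambda>x w. Fh h x w)" using pd by blast
    show "continuous_on UNIV (\<lambda>p. pderivs ws f (fst p) (snd p))"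
      using F_cont[OF sF sG h(1)] h(2) by simp
    fix x y
    show "(\<lambda>t. pderivs ws f t y) differentiable at x"
      using differentiableI_vector[OF F_dx[OF sF sG h(1)]] h(2) by simp
    obtain h' where h': "Cl F G h'" "\<And>w u. ((\<lambda>w. h w u) has_vector_derivative h' w u) (at w)"
      using Cl_dw[OF sF sG h(1)] by blast
    show "(\<lambda>t. pderivs ws f x t) differentiable at y"
      using differentiableI_vector[OF F_dw[OF sF sG h(1) h'(1) h'(2)]] h(2) by simp
  next
    fix ws a b
    obtain h where h: "Cl F G h" "pderivs ws f = (\<lambda>x w. Fh h x w)" using pd by blast
    obtain B where B: "\<And>x w. norm (complex_of_real (x ^ a * w ^ b) * Fh h x w) \<le> B"
      using F_bound[OF sF sG h(1)] by blast
    show "bounded (range (\<lambda>p. complex_of_real (fst p ^ a * snd p ^ b) * pderivs ws f (fst p) (snd p)))"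
      unfolding bounded_iff h(2) using B by blast
  qed
  then show ?thesis unfolding schwartz_Aff_def f_def .
qed


end
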